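(* Let $X$ be a topological space and $x\in X$. Then $\mathrm{cl}_\theta(\{x\})$ equals the union of all finitely non-Hausdorff subsets of $X$ containing $x$, and also equals the union of all maximal finitely non-Hausdorff subsets of $X$ containing $x$.
   Context: For $A\subseteq X$, $\mathrm{cl}_\theta(A):=\{y\in X:\ \overline{B}\cap A\neq\emptyset$ for every open neighborhood $B$ of $y\}$. A non-empty subset $A$ of $X$ is finitely non-Hausdorff if for every non-empty finite $F\subseteq A$ and every family $\{U_y:y\in F\}$ of open neighborhoods $U_y$ of $y$, $\bigcap_{y\in F}U_y\neq\emptyset$; it is maximal finitely non-Hausdorff if no finitely non-Hausdorff subset of $X$ properly contains it. *)

theory Defs
  imports "HOL-Analysis.Analysis"
begin

definition cl_theta :: "'a::topological_space set \<Rightarrow> 'a set" where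
  "cl_theta A = {y. \<forall>B. open B \<and> y \<in> B \<longrightarrow> closure B \<inter> A \<noteq> {}}"

definition fin_non_hausdorff :: "'a::topological_space set \<Rightarrow> bool" where
  "fin_non_hausdorff A \<longleftrightarrow> A \<noteq> {} \<and>
     (\<forall>F (U :: 'a \<Rightarrow> 'a set). finite F \<and> F \<noteq> {} \<and> F \<subseteq> A \<and>
         (\<forall>y\<in>F. open (U y) \<and> y \<in> U y) \<longrightarrow> (\<Inter>y\<in>F. U y) \<noteq> {})"

definition max_fin_non_hausdorff :: "'a::topological_space set \<Rightarrow> bool" where
  "max_fin_non_hausdorff A \<longleftrightarrow> fin_non_hausdorff A \<and>
     \<not> (\<exists>B. fin_non_hausdorff B \<and> A \<subset> B)"

end

theory Submission
  imports Defs
begin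

lemma L1: "y \<in> cl_theta {x} \<longleftrightarrow> (\<forall>U B. open U \<and> x \<in> U \<and> open B \<and> y \<in> B \<longrightarrow> U \<inter> B \<noteq> {})"
proof -
  have "closure B \<inter> {x} \<noteq> {} \<longleftrightarrow> (\<forall>U. open U \<and> x \<in> U \<longrightarrow> U \<inter> B \<noteq> {})" for B :: "'a set"
  proof
    assume "closure B \<inter> {x} \<noteq> {}"
    then have "x \<in> closure B" by blast
    then show "\<forall>U. open U \<and> x \<in> U \<longrightarrow> U \<inter> B \<noteq> {}"
      using open_Int_closure_eq_empty by blast
  next
    assume h: "\<forall>U. open U \<and> x \<in> U \<longrightarrow> U \<inter> B \<noteq> {}"
    have "x \<in> closure B"
      unfolding closure_iff_nhds_not_empty
    proof (intro allI impI)
      fix A S assume "S \<subseteq> A" "open S" "x \<in> S"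
      then show "B \<inter> A \<noteq> {}" using h by blast
    qed
    then show "closure B \<inter> {x} \<noteq> {}" by blast
  qed
  then show ?thesis unfolding cl_theta_def by auto
qed

lemma L2:
  assumes "\<forall>U B. open U \<and> x \<in> U \<and> open B \<and> y \<in> B \<longrightarrow> U \<inter> B \<noteq> {}"
  shows "fin_non_hausdorff {x, y}"
  unfolding fin_non_hausdorff_def
proof (intro conjI allI impI)
  fix F and U :: "'a \<Rightarrow> 'a set"
  assume h: "finite F \<and> F \<noteq> {} \<and> F \<subseteq> {x, y} \<and> (\<forall>y\<in>F. open (U y) \<and> y \<in> U y)"
  then have "F = {x} \<or> F = {y} \<or> F = {x, y}" by auto
  moreover have "F = {x} \<Longrightarrow> (\<Inter>y\<in>F. U y) \<noteq> {}" using h by auto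
  moreover have "F = {y} \<Longrightarrow> (\<Inter>y\<in>F. U y) \<noteq> {}" using h by auto
  moreover have "F = {x,y} \<Longrightarrow> (\<Inter>y\<in>F. U y) \<noteq> {}"
  proof -
    assume F: "F = {x,y}"
    have "U x \<inter> U y \<noteq> {}" using assms h F by simp
    then show ?thesis using F by simp
  qed
  ultimately show "(\<Inter>y\<in>F. U y) \<noteq> {}" by blast
qed simp

lemma L3:
  assumes "fin_non_hausdorff A" "x \<in> A" "y \<in> A"
  shows "\<forall>U B. open U \<and> x \<in> U \<and> open B \<and> y \<in> B \<longrightarrow> U \<inter> B \<noteq> {}"
proof (intro allI impI)
  fix U B assume h: "open U \<and> x \<in> U \<and> open B \<and> y \<in> B"
  show "U \<inter> B \<noteq> {}"
  proof (cases "x = y")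
    case True then show ?thesis using h by blast
  next
    case False
    define V where "V = (\<lambda>z. if z = x then U else B)"
    have sp: "\<And>F W. finite F \<Longrightarrow> F \<noteq> {} \<Longrightarrow> F \<subseteq> A \<Longrightarrow>
         (\<forall>z\<in>F. open (W z) \<and> z \<in> W z) \<Longrightarrow> (\<Inter>z\<in>F. W z) \<noteq> {}"
      using assms(1) unfolding fin_non_hausdorff_def by blast
    have "\<forall>z\<in>{x,y}. open (V z) \<and> z \<in> V z" using h False unfolding V_def by simp
    then have "(\<Inter>z\<in>{x,y}. V z) \<noteq> {}" using sp[of "{x,y}" V] assms by simp
    moreover have "(\<Inter>z\<in>{x,y}. V z) = U \<inter> B" using False by (auto simp add: V_def)
    ultimately show ?thesis by simp
  qed
qed

lemma chain_union:
  assumes C: "C \<in> chains S" "C \<noteq> {}" and S: "\<forall>A\<in>S. fin_non_hausdorff A"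
  shows "fin_non_hausdorff (\<Union>C)"
  unfolding fin_non_hausdorff_def
proof (intro conjI allI impI)
  have CS: "C \<subseteq> S" and ch: "subset.chain UNIV C" using C(1) unfolding chains_def chain_subset_alt_def by auto
  obtain A0 where A0: "A0 \<in> C" using C by auto
  then have "A0 \<noteq> {}" using CS S unfolding fin_non_hausdorff_def by blast
  then show "\<Union>C \<noteq> {}" using A0 by blast
  fix F and U :: "'a \<Rightarrow> 'a set"
  assume h: "finite F \<and> F \<noteq> {} \<and> F \<subseteq> \<Union>C \<and> (\<forall>y\<in>F. open (U y) \<and> y \<in> U y)"
  obtain B where B: "B \<in> C" "F \<subseteq> B"
    using finite_subset_Union_chain[of F C UNIV] h C(2) ch by blast
  then have "fin_non_hausdorff B" using CS S by blast
  then show "(\<Inter>y\<in>F. U y) \<noteq> {}"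
    using h B unfolding fin_non_hausdorff_def by blast
qed

theorem corollary2p13:
  fixes x :: "'a::topological_space"
  shows "cl_theta {x} = \<Union> {A. fin_non_hausdorff A \<and> x \<in> A}
     \<and> cl_theta {x} = \<Union> {A. max_fin_non_hausdorff A \<and> x \<in> A}"
proof -
  have a: "cl_theta {x} \<subseteq> \<Union> {A. max_fin_non_hausdorff A \<and> x \<in> A}"
  proof
    fix y assume "y \<in> cl_theta {x}"
    then have f: "fin_non_hausdorff {x,y}" by (rule L2[OF L1[THEN iffD1]])
    define S where "S = {B. fin_non_hausdorff B \<and> {x,y} \<subseteq> B}"
    have SF: "\<forall>A\<in>S. fin_non_hausdorff A" unfolding S_def by simp
    have "\<forall>C\<in>chains S. \<exists>U\<in>S. \<forall>X\<in>C. X \<subseteq> U"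
    proof
      fix C assume C: "C \<in> chains S"
      show "\<exists>U\<in>S. \<forall>X\<in>C. X \<subseteq> U"
      proof (cases "C = {}")
        case True
        have "{x,y} \<in> S" using f unfolding S_def by simp
        then show ?thesis using True by blast
      next
        case False
        have 1: "fin_non_hausdorff (\<Union>C)" using chain_union[OF C False SF] .
        have CS: "C \<subseteq> S" using C unfolding chains_def by simp
        obtain A0 where "A0 \<in> C" using False by blast
        then have "{x,y} \<subseteq> A0" using CS unfolding S_def by blast
        then have "{x,y} \<subseteq> \<Union>C" using \<open>A0 \<in> C\<close> by blast
        with 1 have "\<Union>C \<in> S" unfolding S_def by simp
        then show ?thesis by blast
      qed
    qed
    then have "\<exists>M\<in>S. \<forall>X\<in>S. M \<subseteq> X \<longrightarrow> X = M" by (rule Zorn_Lemma2)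
    then obtain M where M: "M \<in> S" "\<forall>X\<in>S. M \<subseteq> X \<longrightarrow> X = M" by (elim bexE)
    have MS: "fin_non_hausdorff M" "{x,y} \<subseteq> M" using M(1) unfolding S_def by simp_all
    have "\<not> (\<exists>B. fin_non_hausdorff B \<and> M \<subset> B)"
    proof
      assume "\<exists>B. fin_non_hausdorff B \<and> M \<subset> B"
      then obtain B where B: "fin_non_hausdorff B" "M \<subset> B" by blast
      then have "B \<in> S" using MS unfolding S_def by blast
      then have "B = M" using M(2) B(2) by blast
      then show False using B(2) by blast
    qed
    then have "max_fin_non_hausdorff M"
      unfolding max_fin_non_hausdorff_def using MS(1) by blast
    then show "y \<in> \<Union> {A. max_fin_non_hausdorff A \<and> x \<in> A}" using MS(2) by blast
  qed
  have b: "\<Union> {A. fin_non_hausdorff A \<and> x \<in> A} \<subseteq> cl_theta {x}"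
  proof
    fix y assume "y \<in> \<Union> {A. fin_non_hausdorff A \<and> x \<in> A}"
    then obtain A where A: "fin_non_hausdorff A" "x \<in> A" "y \<in> A" by blast
    show "y \<in> cl_theta {x}" by (rule L1[THEN iffD2, OF L3[OF A]])
  qed
  have c: "\<Union> {A. max_fin_non_hausdorff A \<and> x \<in> A} \<subseteq> \<Union> {A. fin_non_hausdorff A \<and> x \<in> A}"
    unfolding max_fin_non_hausdorff_def by blast
  have d: "\<Union> {A. max_fin_non_hausdorff A \<and> x \<in> A} \<subseteq> cl_theta {x}" using c b by (rule order_trans)
  have e: "cl_theta {x} \<subseteq> \<Union> {A. fin_non_hausdorff A \<and> x \<in> A}" using a c by (rule order_trans)
  show ?thesis by (intro conjI equalityI e b a d)
qed

end
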